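(* Let $k\ge0$ be an integer and let $f:\mathbb{R}\to\mathbb{R}$ be a discontinuous $(2k+1)$-monomial function, and let $g(x)=xf(x)$. Then the graph $G(f)=\{(x,f(x)):x\in\mathbb{R}\}$ is connected if and only if the graph $G(g)=\{(x,g(x)):x\in\mathbb{R}\}$ is connected.
   Context: For $h\in\mathbb{R}$, $\Delta_h f(x)=f(x+h)-f(x)$ and $\Delta_h^{n}=\Delta_h\circ\Delta_h^{n-1}$. A function $f:\mathbb{R}\to\mathbb{R}$ is an $n$-monomial function if $\frac{1}{n!}\Delta_h^n f(x)=f(h)$ for all $x,h\in\mathbb{R}$. (Then $g$ is a discontinuous $(2k+2)$-monomial function.) *)

theory Defs
  imports "HOL-Analysis.Analysis"
begin

definition diff_op :: "real \<Rightarrow> (real \<Rightarrow> real) \<Rightarrow> (real \<Rightarrow> real)" where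
  "diff_op h f = (\<lambda>x. f (x + h) - f x)"

definition diff_pow :: "real \<Rightarrow> nat \<Rightarrow> (real \<Rightarrow> real) \<Rightarrow> (real \<Rightarrow> real)" where
  "diff_pow h n = (diff_op h) ^^ n"

definition monomial_fun :: "nat \<Rightarrow> (real \<Rightarrow> real) \<Rightarrow> bool" where
  "monomial_fun n f \<longleftrightarrow> (\<forall>x h. diff_pow h n f x / fact n = f h)"

definition graph_of :: "(real \<Rightarrow> real) \<Rightarrow> (real \<times> real) set" where
  "graph_of f = {(x, f x) | x. x \<in> UNIV}"

end

theory Submission
  imports Defs
begin

definition ssum :: "real \<Rightarrow> nat \<Rightarrow> (real \<Rightarrow> real) \<Rightarrow> real \<Rightarrow> real" where
  "ssum h m \<phi> = (\<lambda>x. \<Sum>j<m. \<phi> (x + real j * h))"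

lemma diff_op_mult: "diff_op (real m * h) \<phi> = ssum h m (diff_op h \<phi>)"
proof
  fix x
  have e: "\<And>j. \<phi> (x + real j * h + h) = \<phi> (x + real (Suc j) * h)"
    by (simp add: algebra_simps)
  have "(\<Sum>j<m. \<phi> (x + real j * h + h) - \<phi> (x + real j * h)) = \<phi> (x + real m * h) - \<phi> x"
    unfolding e using sum_lessThan_telescope[of "\<lambda>j. \<phi> (x + real j * h)" m] by simp
  then show "diff_op (real m * h) \<phi> x = ssum h m (diff_op h \<phi>) x"
    unfolding ssum_def diff_op_def by simp
qed

lemma diff_ssum_comm: "diff_op h (ssum h m \<phi>) = ssum h m (diff_op h \<phi>)"
proof
  fix x
  have e: "\<And>j. \<phi> (x + h + real j * h) = \<phi> (x + real j * h + h)"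
    by (simp add: algebra_simps)
  show "diff_op h (ssum h m \<phi>) x = ssum h m (diff_op h \<phi>) x"
    unfolding ssum_def diff_op_def e by (simp add: sum_subtractf)
qed

lemma diff_ssum_pow: "diff_op h ((ssum h m ^^ n) \<phi>) = (ssum h m ^^ n) (diff_op h \<phi>)"
  by (induction n) (simp_all add: diff_ssum_comm)

lemma diffpow_mult: "(diff_op (real m * h) ^^ n) \<phi> = (ssum h m ^^ n) ((diff_op h ^^ n) \<phi>)"
proof (induction n)
  case 0
  then show ?case by simp
next
  case (Suc n)
  have "(diff_op (real m * h) ^^ Suc n) \<phi> = diff_op (real m * h) ((diff_op (real m * h) ^^ n) \<phi>)"
    by simp
  also have "\<dots> = ssum h m (diff_op h ((ssum h m ^^ n) ((diff_op h ^^ n) \<phi>)))"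
    by (simp add: Suc diff_op_mult)
  also have "\<dots> = ssum h m ((ssum h m ^^ n) (diff_op h ((diff_op h ^^ n) \<phi>)))"
    by (simp add: diff_ssum_pow)
  also have "\<dots> = (ssum h m ^^ Suc n) ((diff_op h ^^ Suc n) \<phi>)"
    by (simp add: funpow_swap1)
  finally show ?case .
qed

lemma ssum_const: "(ssum h m ^^ n) (\<lambda>_. c) = (\<lambda>_. real m ^ n * c)"
  by (induction n) (simp_all add: ssum_def mult.assoc)

lemma mono_scale:
  assumes "monomial_fun n f"
  shows "f (real m * h) = real m ^ n * f h"
proof -
  have fn: "fact n \<noteq> (0::real)" by simp
  have d: "\<And>h. (diff_op h ^^ n) f = (\<lambda>_. fact n * f h)"
  proof
    fix h x
    have "diff_pow h n f x / fact n = f h" using assms unfolding monomial_fun_def by blast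
    then show "(diff_op h ^^ n) f x = fact n * f h" using fn
      unfolding diff_pow_def by (simp add: field_simps)
  qed
  have "fact n * f (real m * h) = (diff_op (real m * h) ^^ n) f 0" using d by simp
  also have "\<dots> = real m ^ n * (fact n * f h)"
    unfolding diffpow_mult d ssum_const by simp
  finally show ?thesis using fn by (simp add: field_simps)
qed

lemma key:
  fixes f :: "real \<Rightarrow> real" and T :: "(real \<times> real) set"
  assumes cH: "connected (graph_of (\<lambda>x. x * f x))"
    and opT: "openin (top_of_set (graph_of f)) T"
    and clT: "closedin (top_of_set (graph_of f)) T"
    and b: "\<sigma> * b > 0" and bA: "(b, f b) \<notin> T"
    and tA: "(t, f t) \<in> T" and tb: "\<sigma> * t > \<sigma> * b"
  shows False
proof -
  let ?G = "graph_of f" and ?H = "graph_of (\<lambda>x. x * f x)"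
  have TG: "T \<subseteq> ?G" using opT by (meson openin_imp_subset)
  obtain O1 where O1: "open O1" "T = ?G \<inter> O1" using opT openin_open by metis
  obtain C1 where C1: "closed C1" "T = ?G \<inter> C1" using clT closedin_closed by metis
  define \<Psi> where "\<Psi> = (\<lambda>p::real\<times>real. (fst p, snd p / fst p))"
  define W where "W = {(x, x * f x) | x. \<sigma> * b < \<sigma> * x \<and> (x, f x) \<in> T}"
  define S1 where "S1 = {p::real\<times>real. \<sigma> * b < \<sigma> * fst p}"
  define S2 where "S2 = {p::real\<times>real. \<sigma> * b \<le> \<sigma> * fst p}"
  have nz: "\<And>x. \<sigma> * b \<le> \<sigma> * x \<Longrightarrow> x \<noteq> 0" using b by auto
  have oS1: "open S1" unfolding S1_def by (intro open_Collect_less continuous_intros)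
  have cS2: "closed S2" unfolding S2_def by (intro closed_Collect_le continuous_intros)
  have nz1: "\<forall>p\<in>S1. fst p \<noteq> 0" unfolding S1_def using nz less_imp_le by blast
  have nz2: "\<forall>p\<in>S2. fst p \<noteq> 0" unfolding S2_def using nz by blast
  have cont1: "continuous_on S1 \<Psi>" unfolding \<Psi>_def
    by (intro continuous_intros nz1)
  have cont2: "continuous_on S2 \<Psi>" unfolding \<Psi>_def
    by (intro continuous_intros nz2)
  have oO: "open (\<Psi> -` O1 \<inter> S1)" using continuous_on_open_vimage[OF oS1] cont1 O1(1) by blast
  have cC: "closed (\<Psi> -` C1 \<inter> S2)" using continuous_on_closed_vimage[OF cS2] cont2 C1(1) by blast
  have mem: "\<And>x. (x, f x) \<in> ?G" by (auto simp: graph_of_def)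
  have W1: "W = ?H \<inter> (\<Psi> -` O1 \<inter> S1)"
  proof (intro set_eqI iffI)
    fix p assume "p \<in> W"
    then obtain x where p: "p = (x, x * f x)" "\<sigma> * b < \<sigma> * x" "(x, f x) \<in> T" unfolding W_def by blast
    have "x \<noteq> 0" using nz p(2) less_imp_le by blast
    then show "p \<in> ?H \<inter> (\<Psi> -` O1 \<inter> S1)" using p O1(2)
      by (auto simp: graph_of_def \<Psi>_def S1_def)
  next
    fix p assume "p \<in> ?H \<inter> (\<Psi> -` O1 \<inter> S1)"
    then obtain x where p: "p = (x, x * f x)" "\<sigma> * b < \<sigma> * x" "(x, x * f x / x) \<in> O1"
      by (auto simp: graph_of_def \<Psi>_def S1_def)
    have "x \<noteq> 0" using nz p(2) less_imp_le by blast
    then have "(x, f x) \<in> T" using p(3) O1(2) mem by auto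
    then show "p \<in> W" using p unfolding W_def by blast
  qed
  have W2: "W = ?H \<inter> (\<Psi> -` C1 \<inter> S2)"
  proof (intro set_eqI iffI)
    fix p assume "p \<in> W"
    then obtain x where p: "p = (x, x * f x)" "\<sigma> * b < \<sigma> * x" "(x, f x) \<in> T" unfolding W_def by blast
    have "x \<noteq> 0" using nz p(2) less_imp_le by blast
    then show "p \<in> ?H \<inter> (\<Psi> -` C1 \<inter> S2)" using p C1(2)
      by (auto simp: graph_of_def \<Psi>_def S2_def)
  next
    fix p assume "p \<in> ?H \<inter> (\<Psi> -` C1 \<inter> S2)"
    then obtain x where p: "p = (x, x * f x)" "\<sigma> * b \<le> \<sigma> * x" "(x, x * f x / x) \<in> C1"
      by (auto simp: graph_of_def \<Psi>_def S2_def)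
    have "x \<noteq> 0" using nz p(2) less_imp_le by blast
    then have xT: "(x, f x) \<in> T" using p(3) C1(2) mem by auto
    have "x \<noteq> b" using xT bA by auto
    then have "\<sigma> * b \<noteq> \<sigma> * x" using b by auto
    then have "\<sigma> * b < \<sigma> * x" using p(2) by linarith
    then show "p \<in> W" using p xT unfolding W_def by blast
  qed
  have "openin (top_of_set ?H) W" unfolding openin_open using W1 oO by blast
  moreover have "closedin (top_of_set ?H) W" unfolding closedin_closed using W2 cC by blast
  ultimately have "W = {} \<or> W = ?H" using cH connected_clopen by blast
  moreover have "(t, t * f t) \<in> W" unfolding W_def using tA tb by blast
  moreover have "(0, 0 * f 0) \<in> ?H" by (auto simp: graph_of_def)
  moreover have "(0, 0 * f 0) \<notin> W" unfolding W_def using b by auto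
  ultimately show False by blast
qed

lemma clopen_origin:
  fixes f :: "real \<Rightarrow> real" and T :: "(real \<times> real) set"
  assumes cH: "connected (graph_of (\<lambda>x. x * f x))"
    and opT: "openin (top_of_set (graph_of f)) T"
    and clT: "closedin (top_of_set (graph_of f)) T"
    and f0: "f 0 = 0"
    and n: "n \<ge> 1"
    and sc: "\<And>m h. f (real m * h) = real m ^ n * f h"
    and T0: "(0, 0) \<notin> T"
  shows "T = {}"
proof (rule ccontr)
  assume "T \<noteq> {}"
  have TG: "T \<subseteq> graph_of f" using opT by (meson openin_imp_subset)
  obtain t where tT: "(t, f t) \<in> T" using \<open>T \<noteq> {}\<close> TG by (auto simp: graph_of_def)
  have "t \<noteq> 0" using tT T0 f0 by auto
  define \<sigma> :: real where "\<sigma> = (if t > 0 then 1 else -1)"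
  have st: "\<sigma> * t > 0" using \<open>t \<noteq> 0\<close> by (auto simp: \<sigma>_def)
  have ss: "\<sigma> * \<sigma> = 1" by (simp add: \<sigma>_def)
  have inT: "(b, f b) \<in> T" if "0 < \<sigma> * b" "\<sigma> * b < \<sigma> * t" for b
    using key[OF cH opT clT that(1) _ tT that(2)] by blast
  define x where "x = (\<lambda>j::nat. \<sigma> * (1 / real (Suc j)))"
  have fx: "f (x j) = f \<sigma> * (1 / real (Suc j)) ^ n" for j
  proof -
    have "f \<sigma> = f (real (Suc j) * x j)" by (simp add: x_def)
    also have "\<dots> = real (Suc j) ^ n * f (x j)" by (rule sc)
    finally show ?thesis by (simp add: field_simps)
  qed
  have lim1: "(\<lambda>j. 1 / real (Suc j)) \<longlonglongrightarrow> 0"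
    using LIMSEQ_inverse_real_of_nat by (simp add: inverse_eq_divide)
  have "((\<lambda>j. (x j, f (x j))) \<longlongrightarrow> (\<sigma> * 0, f \<sigma> * 0 ^ n)) sequentially"
  proof -
    have e: "(\<lambda>j. (x j, f (x j))) = (\<lambda>j. (\<sigma> * (1 / real (Suc j)), f \<sigma> * (1 / real (Suc j)) ^ n))"
      by (simp only: fx) (simp add: x_def)
    show ?thesis unfolding e by (intro tendsto_intros lim1)
  qed
  then have lim: "((\<lambda>j. (x j, f (x j))) \<longlongrightarrow> (0, 0)) sequentially" using n by (simp add: power_0_left)
  have ev: "eventually (\<lambda>j. 1 / real (Suc j) < \<sigma> * t) sequentially"
    using order_tendstoD(2)[OF lim1 st] .
  have "eventually (\<lambda>j. (x j, f (x j)) \<in> T) sequentially"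
  proof (rule eventually_mono[OF ev])
    fix j assume "1 / real (Suc j) < \<sigma> * t"
    moreover have "\<sigma> * x j = 1 / real (Suc j)" unfolding x_def using ss
      by (metis mult.assoc mult_1)
    ultimately show "(x j, f (x j)) \<in> T" using inT by simp
  qed
  obtain C1 where C1: "closed C1" "T = graph_of f \<inter> C1" using clT closedin_closed by metis
  have "eventually (\<lambda>j. (x j, f (x j)) \<in> C1) sequentially"
    using \<open>eventually (\<lambda>j. (x j, f (x j)) \<in> T) sequentially\<close> C1(2)
    by (auto elim: eventually_mono)
  then have "(0, 0) \<in> C1" using Lim_in_closed_set[OF C1(1) _ _ lim] by simp
  moreover have "(0, 0) \<in> graph_of f" using f0 by (auto simp: graph_of_def)
  ultimately show False using T0 C1(2) by blast
qed

theorem mainTheorem7: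
  fixes k :: nat and f :: "real \<Rightarrow> real"
  assumes "monomial_fun (2 * k + 1) f"
    and "\<not> continuous_on UNIV f"
  shows "connected (graph_of f) \<longleftrightarrow> connected (graph_of (\<lambda>x. x * f x))"
proof -
  define n where "n = 2 * k + 1"
  have n: "n \<ge> 1" by (simp add: n_def)
  have sc: "\<And>m h. f (real m * h) = real m ^ n * f h"
    using mono_scale assms(1) unfolding n_def by blast
  have "f 0 = 2 ^ n * f 0" using sc[of 2 0] by simp
  moreover have "(2::real) ^ n \<ge> 2 ^ 1" by (rule power_increasing[OF n]) simp
  ultimately have f0: "f 0 = 0"
    by (metis mult_cancel_right2 numeral_le_one_iff power_one_right semiring_norm(69))
  define \<Phi> where "\<Phi> = (\<lambda>p::real\<times>real. (fst p, fst p * snd p))"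
  have HG: "graph_of (\<lambda>x. x * f x) = \<Phi> ` graph_of f"
    by (auto simp: graph_of_def \<Phi>_def image_iff)
  have cP: "continuous_on (graph_of f) \<Phi>" unfolding \<Phi>_def by (intro continuous_intros)
  show ?thesis
  proof
    assume "connected (graph_of f)"
    then show "connected (graph_of (\<lambda>x. x * f x))"
      unfolding HG by (rule connected_continuous_image[OF cP])
  next
    assume cH: "connected (graph_of (\<lambda>x. x * f x))"
    show "connected (graph_of f)"
      unfolding connected_clopen
    proof (intro allI impI)
      fix T assume T: "openin (top_of_set (graph_of f)) T \<and> closedin (top_of_set (graph_of f)) T"
      show "T = {} \<or> T = graph_of f"
      proof (cases "(0, 0) \<in> T")
        case False
        then show ?thesis using clopen_origin[OF cH _ _ f0 n sc] T by blast
      next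
        case True
        have o: "openin (top_of_set (graph_of f)) (graph_of f - T)"
          using T by (simp add: openin_diff)
        have c: "closedin (top_of_set (graph_of f)) (graph_of f - T)"
          using T by (simp add: closedin_diff)
        have "graph_of f - T = {}" using clopen_origin[OF cH o c f0 n sc] True by blast
        then show ?thesis using T by (auto dest: openin_imp_subset)
      qed
    qed
  qed
qed

end
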